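(* Let $\rho_{AB}$ be a two-qubit Bell diagonal state, i.e. $\rho_{AB}=p_0|\phi^+\rangle\langle\phi^+|+p_1|\psi^+\rangle\langle\psi^+|+p_2|\psi^-\rangle\langle\psi^-|+p_3|\phi^-\rangle\langle\phi^-|$ with $(p_0,p_1,p_2,p_3)$ a probability vector, where $|\phi^\pm\rangle=(|00\rangle\pm|11\rangle)/\sqrt2$ and $|\psi^\pm\rangle=(|01\rangle\pm|10\rangle)/\sqrt2$. Let $R_{\mu\nu}=\operatorname{Tr}[(\sigma_\mu\otimes\sigma_\nu)\rho_{AB}]$ for $\mu,\nu\in\{0,1,2,3\}$, and let $\lambda_1\le\lambda_2\le\lambda_3$ be the numbers $|R_{11}|,|R_{22}|,|R_{33}|$ arranged in nondecreasing order. Then the one-sided negativity of quantumness of $\rho_{AB}$ on $A$ is $$Q^A_{\mathcal N}(\rho_{AB})=\frac{\lambda_2}{2}.$$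
   Context: $\sigma_0=\mathbb I$, $\sigma_1=\sigma_x$, $\sigma_2=\sigma_y$, $\sigma_3=\sigma_z$ are the identity and Pauli matrices. For a bipartite state $\tau_{X:Y}$, the negativity is $\mathcal N_{X:Y}(\tau)=(\|\tau^{\Gamma}\|_1-1)/2$, where $\tau^\Gamma$ is the partial transpose with respect to one of the parties (in any product basis) and $\|\cdot\|_1$ is the trace norm (sum of singular values). For a finite-dimensional system $A$ of dimension $m$ and an orthonormal basis $\{|a_k\rangle\}_{k=1}^m$ of $A$, the measurement interaction is the isometry $V:A\to A\otimes A'$, with $A'$ an $m$-dimensional system with computational basis $\{|k\rangle\}$, defined by $V|a_k\rangle=|a_k\rangle|k\rangle$. The one-sided negativity of quantumness of a state $\rho_{AB}$ on $A$ is $Q^A_{\mathcal N}(\rho_{AB})=\min\mathcal N_{AB:A'}\big((V\otimes\mathbb I_B)\rho_{AB}(V\otimes\mathbb I_B)^\dagger\big)$, the minimum being over all orthonormal bases of $A$ defining $V$. *)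

theory Defs
  imports "Jordan_Normal_Form.Schur_Decomposition"
begin

definition mtrace :: "complex mat \<Rightarrow> complex" where
  "mtrace A = (\<Sum>i<dim_row A. A $$ (i, i))"

text \<open>Kronecker (tensor) product; index of the product basis |i>|j> is i * dim2 + j.\<close>
definition kron :: "complex mat \<Rightarrow> complex mat \<Rightarrow> complex mat" where
  "kron A B = mat (dim_row A * dim_row B) (dim_col A * dim_col B)
     (\<lambda>(i, j). A $$ (i div dim_row B, j div dim_col B) * B $$ (i mod dim_row B, j mod dim_col B))"

definition ketbra :: "complex vec \<Rightarrow> complex mat" where
  "ketbra v = mat (dim_vec v) (dim_vec v) (\<lambda>(i, j). v $ i * cnj (v $ j))"

text \<open>Singular values of A are the square roots of the eigenvalues of A^dagger A (counted with
  algebraic multiplicity); the trace norm is their sum.\<close>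
definition trace_norm :: "complex mat \<Rightarrow> real" where
  "trace_norm A =
     (let p = char_poly (mat_adjoint A * A)
      in \<Sum>x\<in>{x. poly p x = 0}. real (order x p) * sqrt (Re x))"

text \<open>Partial transpose on the second factor of a system X (dim dX) tensor Y (dim dY).\<close>
definition ptrans2 :: "nat \<Rightarrow> nat \<Rightarrow> complex mat \<Rightarrow> complex mat" where
  "ptrans2 dX dY M = mat (dX * dY) (dX * dY)
     (\<lambda>(i, j). M $$ (dY * (i div dY) + j mod dY, dY * (j div dY) + i mod dY))"

definition negativity :: "nat \<Rightarrow> nat \<Rightarrow> complex mat \<Rightarrow> real" where
  "negativity dX dY \<tau> = (trace_norm (ptrans2 dX dY \<tau>) - 1) / 2"

definition orthonormal_basis :: "nat \<Rightarrow> (nat \<Rightarrow> complex vec) \<Rightarrow> bool" where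
  "orthonormal_basis m a \<longleftrightarrow>
     (\<forall>k<m. a k \<in> carrier_vec m) \<and>
     (\<forall>j<m. \<forall>k<m. a j \<bullet>c a k = (if j = k then 1 else 0))"

text \<open>V : A \<rightarrow> A \<otimes> A', V |a_k> = |a_k>|k>, i.e. V = sum_k (|a_k> \<otimes> |k>) <a_k|.
  Row index of A \<otimes> A' is i * m + k.\<close>
definition meas_iso :: "nat \<Rightarrow> (nat \<Rightarrow> complex vec) \<Rightarrow> complex mat" where
  "meas_iso m a = mat (m * m) m
     (\<lambda>(r, j). a (r mod m) $ (r div m) * cnj (a (r mod m) $ j))"

text \<open>Permutation (unitary) reordering A \<otimes> A' \<otimes> B into A \<otimes> B \<otimes> A'
  (dims m, m, dB).\<close>
definition swap_AprimeB :: "nat \<Rightarrow> nat \<Rightarrow> complex mat" where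
  "swap_AprimeB m dB = mat (m * dB * m) (m * m * dB)
     (\<lambda>(r, c). let a = r div (dB * m); b = (r div m) mod dB; k = r mod m
              in if c = (a * m + k) * dB + b then 1 else 0)"

definition measured_state :: "nat \<Rightarrow> nat \<Rightarrow> (nat \<Rightarrow> complex vec) \<Rightarrow> complex mat \<Rightarrow> complex mat" where
  "measured_state m dB a \<rho> =
     (let W = swap_AprimeB m dB * kron (meas_iso m a) (1\<^sub>m dB)
      in W * \<rho> * mat_adjoint W)"

text \<open>One-sided negativity of quantumness on A (dim m) of rho_AB (B of dim dB):
  infimum (= minimum, by compactness) over orthonormal bases of N_{AB:A'}.\<close>
definition QN_A :: "nat \<Rightarrow> nat \<Rightarrow> complex mat \<Rightarrow> real" where
  "QN_A m dB \<rho> = Inf {negativity (m * dB) m (measured_state m dB a \<rho>) | a. orthonormal_basis m a}"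

definition sigma :: "nat \<Rightarrow> complex mat" where
  "sigma \<mu> = (if \<mu> = 0 then mat_of_rows_list 2 [[1, 0], [0, 1]]
             else if \<mu> = 1 then mat_of_rows_list 2 [[0, 1], [1, 0]]
             else if \<mu> = 2 then mat_of_rows_list 2 [[0, -\<i>], [\<i>, 0]]
             else mat_of_rows_list 2 [[1, 0], [0, -1]])"

text \<open>Two-qubit computational basis index: |ab> has index 2a + b.\<close>
definition phi_plus :: "complex vec" where
  "phi_plus = vec_of_list [1 / sqrt 2, 0, 0, 1 / sqrt 2]"
definition phi_minus :: "complex vec" where
  "phi_minus = vec_of_list [1 / sqrt 2, 0, 0, - 1 / sqrt 2]"
definition psi_plus :: "complex vec" where
  "psi_plus = vec_of_list [0, 1 / sqrt 2, 1 / sqrt 2, 0]"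
definition psi_minus :: "complex vec" where
  "psi_minus = vec_of_list [0, 1 / sqrt 2, - 1 / sqrt 2, 0]"

definition corr :: "complex mat \<Rightarrow> nat \<Rightarrow> nat \<Rightarrow> complex" where
  "corr \<rho> \<mu> \<nu> = mtrace (kron (sigma \<mu>) (sigma \<nu>) * \<rho>)"

end

theory Submission
  imports Defs
begin


lemma sum8: "sum f {0..<8::nat} = f 0 + f 1 + f 2 + f 3 + f 4 + f 5 + f 6 + f 7"
  by (simp add: eval_nat_numeral)
lemma sum4: "sum f {0..<4::nat} = f 0 + f 1 + f 2 + f 3"
  by (simp add: eval_nat_numeral)
lemma sum2: "sum f {0..<2::nat} = f 0 + f 1"
  by (simp add: eval_nat_numeral)

lemma adj_mat: "mat_adjoint (A :: complex mat) = mat (dim_col A) (dim_row A) (\<lambda>(i,j). cnj (A $$ (j,i)))"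
  by (rule eq_matI, auto simp: mat_adjoint_def mat_of_rows_def)

lemma adj_index[simp]: "i < dim_col A \<Longrightarrow> j < dim_row A \<Longrightarrow> mat_adjoint (A :: complex mat) $$ (i,j) = cnj (A $$ (j,i))"
  "dim_row (mat_adjoint A) = dim_col A" "dim_col (mat_adjoint A) = dim_row A"
  by (auto simp: adj_mat)

lemma adj_carrier[simp]: "A \<in> carrier_mat n m \<Longrightarrow> mat_adjoint (A :: complex mat) \<in> carrier_mat m n"
  by (auto simp: adj_mat)

lemma adj_adj[simp]: "mat_adjoint (mat_adjoint (A :: complex mat)) = A"
  by (rule eq_matI, auto)

lemma adj_mult: assumes "(A :: complex mat) \<in> carrier_mat n m" "B \<in> carrier_mat m k"
  shows "mat_adjoint (A * B) = mat_adjoint B * mat_adjoint A"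
  by (rule eq_matI, insert assms, auto simp: scalar_prod_def cnj_sum mult.commute)

definition Wm :: "(nat \<Rightarrow> complex vec) \<Rightarrow> complex mat" where
  "Wm a = mat 8 4 (\<lambda>(r,c). if (r div 2) mod 2 = c mod 2 then a (r mod 2) $ (r div 4) * cnj (a (r mod 2) $ (c div 2)) else 0)"

lemma W_eq: "swap_AprimeB 2 2 * kron (meas_iso 2 a) (1\<^sub>m 2) = Wm a"
proof (rule eq_matI)
  show "dim_row (swap_AprimeB 2 2 * kron (meas_iso 2 a) (1\<^sub>m 2)) = dim_row (Wm a)"
    by (simp add: swap_AprimeB_def Wm_def)
  show "dim_col (swap_AprimeB 2 2 * kron (meas_iso 2 a) (1\<^sub>m 2)) = dim_col (Wm a)"
    by (simp add: kron_def meas_iso_def Wm_def)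
  fix r c assume r: "r < dim_row (Wm a)" and c: "c < dim_col (Wm a)"
  hence r8: "r < 8" and c4: "c < 4" by (auto simp: Wm_def)
  have "r \<in> {0,1,2,3,4,5,6,7}" using r8 by auto
  thus "(swap_AprimeB 2 2 * kron (meas_iso 2 a) (1\<^sub>m 2)) $$ (r,c) = Wm a $$ (r,c)"
    using c4 by (elim insertE emptyE; simp add: swap_AprimeB_def kron_def meas_iso_def Wm_def scalar_prod_def sum8)
qed


definition Rm :: "(nat \<Rightarrow> complex vec) \<Rightarrow> complex mat \<Rightarrow> nat \<Rightarrow> nat \<Rightarrow> nat \<Rightarrow> nat \<Rightarrow> complex" where
  "Rm a \<rho> k l b b' = (\<Sum>j\<in>{0..<2}. \<Sum>j'\<in>{0..<2}. cnj (a k $ j) * \<rho> $$ (2*j+b, 2*j'+b') * a l $ j')"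

lemma ms_eq: "measured_state 2 2 a \<rho> = Wm a * \<rho> * mat_adjoint (Wm a)"
  by (simp add: measured_state_def W_eq Let_def)

lemma ms_entry: assumes rho: "\<rho> \<in> carrier_mat 4 4" and r: "r < 8" and c: "c < 8"
  shows "measured_state 2 2 a \<rho> $$ (r,c) = a (r mod 2) $ (r div 4) * cnj(a (c mod 2) $ (c div 4))
     * Rm a \<rho> (r mod 2) (c mod 2) ((r div 2) mod 2) ((c div 2) mod 2)"
proof -
  define i k b i' k' b' where i_def: "i = r div 4" and k_def: "k = r mod 2" and b_def: "b = (r div 2) mod 2"
     and i'_def: "i' = c div 4" and k'_def: "k' = c mod 2" and b'_def: "b' = (c div 2) mod 2"
  have W1: "\<And>s. s < 4 \<Longrightarrow> Wm a $$ (r,s) = (if b = s mod 2 then a k $ i * cnj (a k $ (s div 2)) else 0)"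
    using r unfolding Wm_def i_def k_def b_def by simp
  have W2: "\<And>s. s < 4 \<Longrightarrow> Wm a $$ (c,s) = (if b' = s mod 2 then a k' $ i' * cnj (a k' $ (s div 2)) else 0)"
    using c unfolding Wm_def i'_def k'_def b'_def by simp
  have "measured_state 2 2 a \<rho> $$ (r,c) = (\<Sum>t\<in>{0..<4}. (\<Sum>s\<in>{0..<4}. Wm a $$ (r,s) * \<rho> $$ (s,t)) * cnj (Wm a $$ (c,t)))"
    unfolding ms_eq using rho r c by (simp add: Wm_def scalar_prod_def)
  also have "\<dots> = a k $ i * cnj(a k' $ i') * Rm a \<rho> k k' b b'"
  proof -
    have "b < 2" "b' < 2" unfolding b_def b'_def by auto
    hence "(b = 0 \<or> b = 1) \<and> (b' = 0 \<or> b' = 1)" by auto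
    thus ?thesis
      by (elim conjE disjE; simp add: sum4 W1 W2 Rm_def sum2; simp add: algebra_simps eval_nat_numeral)
  qed
  finally show ?thesis unfolding i_def k_def b_def i'_def k'_def b'_def .
qed


definition Pm :: "(nat \<Rightarrow> complex vec) \<Rightarrow> complex mat" where
  "Pm a = mat 8 8 (\<lambda>(r,c). if (r div 2) mod 2 = c mod 2 \<and> r mod 2 = (c div 2) mod 2 then a (c div 4) $ (r div 4) else 0)"

definition T3 :: "(nat \<Rightarrow> complex vec) \<Rightarrow> complex mat \<Rightarrow> complex mat" where
  "T3 a \<rho> = mat 8 8 (\<lambda>(r,c). if r div 4 = (c div 2) mod 2 \<and> (r div 2) mod 2 = c div 4
      then Rm a \<rho> (r div 4) ((r div 2) mod 2) (r mod 2) (c mod 2) else 0)"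

lemma idx_facts: fixes r c :: nat assumes "r < 8" "c < 8"
  shows "(2*(r div 2) + c mod 2) div 4 = r div 4" "(2*(r div 2) + c mod 2) mod 2 = c mod 2"
    "((2*(r div 2) + c mod 2) div 2) mod 2 = (r div 2) mod 2" "2*(r div 2) + c mod 2 < 8"
proof -
  have "r \<in> {0,1,2,3,4,5,6,7}" "c mod 2 = 0 \<or> c mod 2 = 1" using assms by auto
  thus "(2*(r div 2) + c mod 2) div 4 = r div 4" "(2*(r div 2) + c mod 2) mod 2 = c mod 2"
    "((2*(r div 2) + c mod 2) div 2) mod 2 = (r div 2) mod 2" "2*(r div 2) + c mod 2 < 8"
    by (elim insertE emptyE disjE; simp)+
qed

lemma T_entry: assumes rho: "\<rho> \<in> carrier_mat 4 4" and r: "r < 8" and c: "c < 8"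
  shows "ptrans2 4 2 (measured_state 2 2 a \<rho>) $$ (r,c) = a (c mod 2) $ (r div 4) * cnj(a (r mod 2) $ (c div 4))
     * Rm a \<rho> (c mod 2) (r mod 2) ((r div 2) mod 2) ((c div 2) mod 2)"
proof -
  have "ptrans2 4 2 (measured_state 2 2 a \<rho>) $$ (r,c) = measured_state 2 2 a \<rho> $$ (2*(r div 2) + c mod 2, 2*(c div 2) + r mod 2)"
    using r c by (simp add: ptrans2_def)
  then show ?thesis using ms_entry[OF rho idx_facts(4)[OF r c] idx_facts(4)[OF c r]] idx_facts[OF r c] idx_facts[OF c r] by simp
qed

lemma PT3P_entry: assumes r: "r < 8" and c: "c < 8"
  shows "(Pm a * T3 a \<rho> * mat_adjoint (Pm a)) $$ (r,c) = a (c mod 2) $ (r div 4) * cnj(a (r mod 2) $ (c div 4))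
     * Rm a \<rho> (c mod 2) (r mod 2) ((r div 2) mod 2) ((c div 2) mod 2)"
proof -
  define i k b i' k' b' where i_def: "i = r div 4" and k_def: "k = r mod 2" and b_def: "b = (r div 2) mod 2"
     and i'_def: "i' = c div 4" and k'_def: "k' = c mod 2" and b'_def: "b' = (c div 2) mod 2"
  have P1: "\<And>s. s < 8 \<Longrightarrow> Pm a $$ (r,s) = (if b = s mod 2 \<and> k = (s div 2) mod 2 then a (s div 4) $ i else 0)"
    using r unfolding Pm_def i_def k_def b_def by simp
  have P2: "\<And>s. s < 8 \<Longrightarrow> Pm a $$ (c,s) = (if b' = s mod 2 \<and> k' = (s div 2) mod 2 then a (s div 4) $ i' else 0)"
    using c unfolding Pm_def i'_def k'_def b'_def by simp
  have "(Pm a * T3 a \<rho> * mat_adjoint (Pm a)) $$ (r,c) = (\<Sum>t\<in>{0..<8}. (\<Sum>s\<in>{0..<8}. Pm a $$ (r,s) * T3 a \<rho> $$ (s,t)) * cnj (Pm a $$ (c,t)))"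
    using r c by (simp add: Pm_def T3_def scalar_prod_def)
  also have "\<dots> = a k' $ i * cnj(a k $ i') * Rm a \<rho> k' k b b'"
  proof -
    have "b < 2" "b' < 2" "k < 2" "k' < 2" unfolding b_def b'_def k_def k'_def by auto
    hence "(b = 0 \<or> b = 1) \<and> (b' = 0 \<or> b' = 1) \<and> (k = 0 \<or> k = 1) \<and> (k' = 0 \<or> k' = 1)" by auto
    thus ?thesis
      by (elim conjE disjE; simp add: sum8 P1 P2 T3_def)
  qed
  finally show ?thesis unfolding i_def k_def b_def i'_def k'_def b'_def .
qed


lemma T_eq: assumes rho: "\<rho> \<in> carrier_mat 4 4"
  shows "ptrans2 4 2 (measured_state 2 2 a \<rho>) = Pm a * T3 a \<rho> * mat_adjoint (Pm a)"
proof (rule eq_matI)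
  fix r c assume "r < dim_row (Pm a * T3 a \<rho> * mat_adjoint (Pm a))" "c < dim_col (Pm a * T3 a \<rho> * mat_adjoint (Pm a))"
  hence r: "r < 8" and c: "c < 8" by (auto simp: Pm_def)
  show "ptrans2 4 2 (measured_state 2 2 a \<rho>) $$ (r,c) = (Pm a * T3 a \<rho> * mat_adjoint (Pm a)) $$ (r,c)"
    using T_entry[OF rho r c] PT3P_entry[OF r c] by simp
qed (auto simp: ptrans2_def Pm_def)

lemma orth: assumes "orthonormal_basis 2 a" "j < 2" "k < 2"
  shows "cnj (a j $ 0) * a k $ 0 + cnj (a j $ 1) * a k $ 1 = (if j = k then 1 else 0)"
proof -
  have "a k \<bullet>c a j = (if k = j then 1 else 0)" "a j \<in> carrier_vec 2" using assms unfolding orthonormal_basis_def by auto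
  thus ?thesis by (auto simp: scalar_prod_def sum2 mult.commute split: if_splits)
qed

lemma PtP: assumes "orthonormal_basis 2 a"
  shows "mat_adjoint (Pm a) * Pm a = 1\<^sub>m 8"
proof (rule eq_matI)
  note o = orth[OF assms, of 0 0, simplified] orth[OF assms, of 0 1, simplified]
     orth[OF assms, of 1 0, simplified] orth[OF assms, of 1 1, simplified]
  fix r c assume "r < dim_row (1\<^sub>m 8 :: complex mat)" "c < dim_col (1\<^sub>m 8 :: complex mat)"
  hence "r \<in> {0,1,2,3,4,5,6,7}" "c \<in> {0,1,2,3,4,5,6,7}" by auto
  thus "(mat_adjoint (Pm a) * Pm a) $$ (r,c) = 1\<^sub>m 8 $$ (r,c)"
    by (elim insertE emptyE; simp add: Pm_def scalar_prod_def sum8 o)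
qed (auto simp: Pm_def)

lemma PPt: assumes "orthonormal_basis 2 a"
  shows "Pm a * mat_adjoint (Pm a) = 1\<^sub>m 8"
  by (rule mat_mult_left_right_inverse[OF _ _ PtP[OF assms]], auto simp: Pm_def)

definition Qv :: "(nat \<Rightarrow> complex vec) \<Rightarrow> complex mat \<Rightarrow> nat \<Rightarrow> nat \<Rightarrow> nat \<Rightarrow> nat \<Rightarrow> complex" where
  "Qv a \<rho> k l b b' = (\<Sum>c\<in>{0..<2}. cnj (Rm a \<rho> l k c b) * Rm a \<rho> l k c b')"

definition Qb :: "(nat \<Rightarrow> complex vec) \<Rightarrow> complex mat \<Rightarrow> nat \<Rightarrow> nat \<Rightarrow> complex mat" where
  "Qb a \<rho> k l = mat 2 2 (\<lambda>(b,b'). Qv a \<rho> k l b b')"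

definition BDm :: "(nat \<Rightarrow> complex vec) \<Rightarrow> complex mat \<Rightarrow> complex mat" where
  "BDm a \<rho> = four_block_mat (four_block_mat (Qb a \<rho> 0 0) (0\<^sub>m 2 2) (0\<^sub>m 2 2) (Qb a \<rho> 0 1)) (0\<^sub>m 4 4) (0\<^sub>m 4 4)
     (four_block_mat (Qb a \<rho> 1 0) (0\<^sub>m 2 2) (0\<^sub>m 2 2) (Qb a \<rho> 1 1))"

lemma T3T3: "mat_adjoint (T3 a \<rho>) * T3 a \<rho> = BDm a \<rho>"
proof (rule eq_matI)
  fix r c assume "r < dim_row (BDm a \<rho>)" "c < dim_col (BDm a \<rho>)"
  hence "r \<in> {0,1,2,3,4,5,6,7}" "c \<in> {0,1,2,3,4,5,6,7}" by (auto simp: BDm_def Qb_def)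
  thus "(mat_adjoint (T3 a \<rho>) * T3 a \<rho>) $$ (r,c) = BDm a \<rho> $$ (r,c)"
    by (elim insertE emptyE; simp add: T3_def BDm_def Qb_def Qv_def scalar_prod_def sum8 sum2)
qed (auto simp: T3_def BDm_def Qb_def)


lemma det2: assumes A: "(A :: 'a :: comm_ring_1 mat) \<in> carrier_mat 2 2"
  shows "det A = A$$(0,0)*A$$(1,1) - A$$(0,1)*A$$(1,0)"
proof -
  have "det A = (\<Sum>i<2. A $$ (i,0) * cofactor A i 0)"
    by (rule laplace_expansion_column[OF A], auto)
  also have "\<dots> = A $$ (0,0) * det (mat_delete A 0 0) - A $$ (1,0) * det (mat_delete A 1 0)"
    by (simp add: cofactor_def numeral_2_eq_2)
  also have "det (mat_delete A 0 0) = A $$ (1,1)"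
    by (subst det_single, insert A, auto simp: mat_delete_def)
  also have "det (mat_delete A 1 0) = A $$ (0,1)"
    by (subst det_single, insert A, auto simp: mat_delete_def)
  finally show ?thesis by (simp add: algebra_simps)
qed

lemma charpoly2: assumes A: "(A :: 'a :: comm_ring_1 mat) \<in> carrier_mat 2 2"
  shows "char_poly A = [: A$$(0,0)*A$$(1,1) - A$$(0,1)*A$$(1,0), - (A$$(0,0) + A$$(1,1)), 1 :]"
proof -
  have "char_poly A = det (char_poly_matrix A)" by (simp add: char_poly_def)
  also have "\<dots> = (char_poly_matrix A)$$(0,0)*(char_poly_matrix A)$$(1,1) - (char_poly_matrix A)$$(0,1)*(char_poly_matrix A)$$(1,0)"
    by (rule det2, insert A, simp)
  finally show ?thesis using A by (simp add: char_poly_matrix_def algebra_simps)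
qed

lemma order_prod_lin: "order x (\<Prod>e\<leftarrow>es. [:- e, 1:]) = count_list es (x::complex)"
proof (induction es)
  case Nil
  then show ?case by (simp add: order_0I)
next
  case (Cons e es)
  have "order x (\<Prod>e\<leftarrow>e # es. [:- e, 1:]) = order x ([:- e, 1:] * (\<Prod>e\<leftarrow>es. [:- e, 1:]))" by simp
  also have "\<dots> = order x [:- e, 1:] + order x (\<Prod>e\<leftarrow>es. [:- e, 1:])"
  proof (rule order_mult)
    have nz: "(\<Prod>e\<leftarrow>es. [:- e, 1:]) \<noteq> (0 :: complex poly)" by (auto simp: prod_list_zero_iff)
    show "[:- e, 1:] * (\<Prod>e\<leftarrow>es. [:- e, 1:]) \<noteq> 0" using nz by (simp only: mult_eq_0_iff, simp)
  qed
  also have "order x [:- e, 1:] = (if x = e then 1 else 0)"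
    using order_linear_power[of x "-e" 1] by auto
  finally show ?case using Cons by simp
qed

lemma sum_count_real: assumes "finite S" "set es \<subseteq> S"
  shows "(\<Sum>x\<in>S. real (count_list es x) * f x) = (\<Sum>e\<leftarrow>es. (f e :: real))"
  using assms(2)
proof (induction es)
  case (Cons e es)
  have "\<And>x. real (count_list (e#es) x) * f x = (if e = x then f x else 0) + real (count_list es x) * f x"
    by (auto simp: algebra_simps)
  hence "(\<Sum>x\<in>S. real (count_list (e#es) x) * f x) = (\<Sum>x\<in>S. (if e = x then f x else 0)) + (\<Sum>x\<in>S. real (count_list es x) * f x)"
    by (simp add: sum.distrib)
  also have "(\<Sum>x\<in>S. (if e = x then f x else 0)) = f e" using Cons.prems assms(1) by (simp add: sum.delta)
  finally show ?case using Cons by simp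
qed simp

lemma tn_list: fixes es :: "complex list"
  assumes "p = (\<Prod>e\<leftarrow>es. [:- e, 1:])"
  shows "(\<Sum>x\<in>{x. poly p x = 0}. real (order x p) * f x) = (\<Sum>e\<leftarrow>es. f e)"
proof -
  have roots: "{x. poly p x = 0} = set es"
    unfolding assms by (auto simp: poly_prod_list prod_list_zero_iff)
  show ?thesis unfolding roots using order_prod_lin assms sum_count_real[of "set es" es f] by simp
qed

definition nrm :: "(nat \<Rightarrow> nat \<Rightarrow> complex) \<Rightarrow> real" where
  "nrm X = sqrt ((cmod (X 0 0))\<^sup>2 + (cmod (X 0 1))\<^sup>2 + (cmod (X 1 0))\<^sup>2 + (cmod (X 1 1))\<^sup>2
      + 2 * cmod (X 0 0 * X 1 1 - X 0 1 * X 1 0))"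

lemma cnorm_sq: "cnj z * z = complex_of_real ((cmod z)\<^sup>2)"
  by (simp add: mult.commute complex_mult_cnj cmod_power2)

lemma block2: fixes X :: "nat \<Rightarrow> nat \<Rightarrow> complex"
  shows "\<exists>e1 e2. e1 \<ge> 0 \<and> e2 \<ge> 0 \<and>
    char_poly (mat 2 2 (\<lambda>(b,b'). \<Sum>c\<in>{0..<2}. cnj (X c b) * X c b')) = [:- of_real e1, 1:] * [:- of_real e2, 1:]
    \<and> sqrt e1 + sqrt e2 = nrm X"
proof -
  define t where "t = (cmod (X 0 0))\<^sup>2 + (cmod (X 0 1))\<^sup>2 + (cmod (X 1 0))\<^sup>2 + (cmod (X 1 1))\<^sup>2"
  define d where "d = X 0 0 * X 1 1 - X 0 1 * X 1 0"
  define D where "D = cmod d"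
  have D0: "D \<ge> 0" unfolding D_def by simp
  have "D \<le> cmod (X 0 0) * cmod (X 1 1) + cmod (X 0 1) * cmod (X 1 0)"
    unfolding D_def d_def by (metis norm_mult norm_triangle_ineq4)
  moreover have "2 * (cmod (X 0 0) * cmod (X 1 1)) \<le> (cmod (X 0 0))\<^sup>2 + (cmod (X 1 1))\<^sup>2"
    using sum_squares_bound by (simp add: mult.assoc)
  moreover have "2 * (cmod (X 0 1) * cmod (X 1 0)) \<le> (cmod (X 0 1))\<^sup>2 + (cmod (X 1 0))\<^sup>2"
    using sum_squares_bound by (simp add: mult.assoc)
  ultimately have tD: "2 * D \<le> t" unfolding t_def by linarith
  define s where "s = sqrt (t\<^sup>2 - 4 * D\<^sup>2)"
  have "(2*D)\<^sup>2 \<le> t\<^sup>2" by (rule power_mono, use tD D0 in auto)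
  moreover have "(2*D)\<^sup>2 = 4 * D\<^sup>2" by (simp add: power2_eq_square)
  ultimately have h4: "4 * D\<^sup>2 \<le> t\<^sup>2" by simp
  hence s2: "s\<^sup>2 = t\<^sup>2 - 4 * D\<^sup>2" unfolding s_def by simp
  have s0: "s \<ge> 0" unfolding s_def using h4 by simp
  have st: "s \<le> t"
  proof -
    have "s\<^sup>2 \<le> t\<^sup>2" using s2 by simp
    moreover have "0 \<le> t" using tD D0 by simp
    ultimately show ?thesis by (rule power2_le_imp_le)
  qed
  define e1 where "e1 = (t + s) / 2"
  define e2 where "e2 = (t - s) / 2"
  have e1: "e1 \<ge> 0" and e2: "e2 \<ge> 0" unfolding e1_def e2_def using st s0 by auto
  have sum: "e1 + e2 = t" and prod: "e1 * e2 = D\<^sup>2"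
    unfolding e1_def e2_def using s2 by (auto simp: field_simps power2_eq_square)
  let ?Q = "mat 2 2 (\<lambda>(b,b'). \<Sum>c\<in>{0..<2}. cnj (X c b) * X c b')"
  have cp: "char_poly ?Q = [: ?Q$$(0,0) * ?Q$$(1,1) - ?Q$$(0,1) * ?Q$$(1,0), - (?Q$$(0,0) + ?Q$$(1,1)), 1 :]"
    by (rule charpoly2, simp)
  have tr: "?Q$$(0,0) + ?Q$$(1,1) = of_real t"
    by (simp add: sum2 cnorm_sq t_def)
  have dt: "?Q$$(0,0) * ?Q$$(1,1) - ?Q$$(0,1) * ?Q$$(1,0) = d * cnj d"
    by (simp add: sum2 d_def algebra_simps)
  also have "\<dots> = of_real (D\<^sup>2)" unfolding D_def by (simp add: complex_mult_cnj cmod_power2)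
  finally have dt: "?Q$$(0,0) * ?Q$$(1,1) - ?Q$$(0,1) * ?Q$$(1,0) = of_real (D\<^sup>2)" .
  have "char_poly ?Q = [:- of_real e1, 1:] * [:- of_real e2, 1:]"
    unfolding cp tr dt by (simp add: sum[symmetric] prod[symmetric] algebra_simps)
  moreover have "sqrt e1 + sqrt e2 = nrm X"
  proof -
    have "(sqrt e1 + sqrt e2)\<^sup>2 = e1 + e2 + 2 * sqrt (e1 * e2)"
      using e1 e2 by (simp add: power2_eq_square algebra_simps real_sqrt_mult)
    also have "\<dots> = t + 2 * D" using sum prod D0 by simp
    finally have "sqrt e1 + sqrt e2 = sqrt (t + 2 * D)"
      by (metis e1 e2 add_nonneg_nonneg real_sqrt_ge_zero real_sqrt_unique)
    thus ?thesis unfolding nrm_def t_def D_def d_def by simp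
  qed
  ultimately show ?thesis using e1 e2 by blast
qed


lemma sim_prod: assumes "A \<in> carrier_mat n n" "B \<in> carrier_mat n n" "P \<in> carrier_mat n n" "Q \<in> carrier_mat n n"
  "Q * P = 1\<^sub>m n"
  shows "(P * A * Q) * (P * B * Q) = P * (A * B) * (Q :: complex mat)"
proof -
  have QP: "Q * (P * X) = X" if X: "X \<in> carrier_mat n n" for X
  proof -
    have "Q * (P * X) = (Q * P) * X" by (rule assoc_mult_mat[symmetric], insert assms X, auto)
    thus ?thesis using assms X by simp
  qed
  show ?thesis using assms by (simp add: assoc_mult_mat[of _ n n _ n _ n] QP)
qed

lemma cp_linear: "\<exists>es. char_poly (A :: complex mat) = (\<Prod>a\<leftarrow>es. [:- a, 1:])" if "A \<in> carrier_mat n n"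
  using char_poly_factorized[OF that] by blast

lemma cp_TT: assumes orth: "orthonormal_basis 2 a" and rho: "\<rho> \<in> carrier_mat 4 4"
  defines "T \<equiv> ptrans2 4 2 (measured_state 2 2 a \<rho>)"
  shows "char_poly (mat_adjoint T * T) = char_poly (Qb a \<rho> 0 0) * char_poly (Qb a \<rho> 0 1) * char_poly (Qb a \<rho> 1 0) * char_poly (Qb a \<rho> 1 1)"
proof -
  have P: "Pm a \<in> carrier_mat 8 8" and T3c: "T3 a \<rho> \<in> carrier_mat 8 8" by (auto simp: Pm_def T3_def)
  have Pt: "mat_adjoint (Pm a) \<in> carrier_mat 8 8" using P by simp
  have T: "T = Pm a * T3 a \<rho> * mat_adjoint (Pm a)" unfolding T_def by (rule T_eq[OF rho])
  have Tt: "mat_adjoint T = Pm a * mat_adjoint (T3 a \<rho>) * mat_adjoint (Pm a)"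
  proof -
    have "mat_adjoint (Pm a * T3 a \<rho> * mat_adjoint (Pm a)) = mat_adjoint (mat_adjoint (Pm a)) * mat_adjoint (Pm a * T3 a \<rho>)"
      by (rule adj_mult[of _ 8 8 _ 8], insert P T3c Pt, auto)
    also have "mat_adjoint (Pm a * T3 a \<rho>) = mat_adjoint (T3 a \<rho>) * mat_adjoint (Pm a)"
      by (rule adj_mult[of _ 8 8 _ 8], insert P T3c Pt, auto)
    finally show ?thesis unfolding T using P T3c Pt by (simp add: assoc_mult_mat[of _ 8 8 _ 8 _ 8])
  qed
  have "mat_adjoint T * T = Pm a * (mat_adjoint (T3 a \<rho>) * T3 a \<rho>) * mat_adjoint (Pm a)"
    unfolding Tt by (subst T, rule sim_prod[of _ 8], insert P T3c Pt PtP[OF orth], auto)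
  also have "\<dots> = Pm a * BDm a \<rho> * mat_adjoint (Pm a)" by (simp add: T3T3)
  finally have TT: "mat_adjoint T * T = Pm a * BDm a \<rho> * mat_adjoint (Pm a)" .
  have BD: "BDm a \<rho> \<in> carrier_mat 8 8" by (auto simp: BDm_def Qb_def)
  have "similar_mat (mat_adjoint T * T) (BDm a \<rho>)"
    by (rule similar_matI[where P="Pm a" and Q="mat_adjoint (Pm a)" and n=8], insert TT BD P Pt PtP[OF orth] PPt[OF orth], auto simp: assoc_mult_mat[of _ 8 8 _ 8 _ 8])
  hence "char_poly (mat_adjoint T * T) = char_poly (BDm a \<rho>)" by (rule char_poly_similar)
  also have "\<dots> = char_poly (four_block_mat (Qb a \<rho> 0 0) (0\<^sub>m 2 2) (0\<^sub>m 2 2) (Qb a \<rho> 0 1)) *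
     char_poly (four_block_mat (Qb a \<rho> 1 0) (0\<^sub>m 2 2) (0\<^sub>m 2 2) (Qb a \<rho> 1 1))"
    by (rule char_poly_0_block[OF BDm_def], (rule cp_linear, auto simp: Qb_def)+)
  also have "char_poly (four_block_mat (Qb a \<rho> 0 0) (0\<^sub>m 2 2) (0\<^sub>m 2 2) (Qb a \<rho> 0 1)) = char_poly (Qb a \<rho> 0 0) * char_poly (Qb a \<rho> 0 1)"
    by (rule char_poly_0_block[OF refl], (rule cp_linear, auto simp: Qb_def)+)
  also have "char_poly (four_block_mat (Qb a \<rho> 1 0) (0\<^sub>m 2 2) (0\<^sub>m 2 2) (Qb a \<rho> 1 1)) = char_poly (Qb a \<rho> 1 0) * char_poly (Qb a \<rho> 1 1)"
    by (rule char_poly_0_block[OF refl], (rule cp_linear, auto simp: Qb_def)+)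
  finally show ?thesis by (simp add: mult.assoc)
qed

lemma trace_norm_T: assumes orth: "orthonormal_basis 2 a" and rho: "\<rho> \<in> carrier_mat 4 4"
  shows "trace_norm (ptrans2 4 2 (measured_state 2 2 a \<rho>)) =
     nrm (Rm a \<rho> 0 0) + nrm (Rm a \<rho> 1 0) + nrm (Rm a \<rho> 0 1) + nrm (Rm a \<rho> 1 1)"
proof -
  have Qb: "Qb a \<rho> k l = mat 2 2 (\<lambda>(b,b'). \<Sum>c\<in>{0..<2}. cnj (Rm a \<rho> l k c b) * Rm a \<rho> l k c b')" for k l
    by (simp add: Qb_def Qv_def)
  obtain e1 e2 where E1: "char_poly (Qb a \<rho> 0 0) = [:- of_real e1, 1:] * [:- of_real e2, 1:]" "sqrt e1 + sqrt e2 = nrm (Rm a \<rho> 0 0)"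
    using block2[of "Rm a \<rho> 0 0"] unfolding Qb by blast
  obtain e3 e4 where E2: "char_poly (Qb a \<rho> 0 1) = [:- of_real e3, 1:] * [:- of_real e4, 1:]" "sqrt e3 + sqrt e4 = nrm (Rm a \<rho> 1 0)"
    using block2[of "Rm a \<rho> 1 0"] unfolding Qb by blast
  obtain e5 e6 where E3: "char_poly (Qb a \<rho> 1 0) = [:- of_real e5, 1:] * [:- of_real e6, 1:]" "sqrt e5 + sqrt e6 = nrm (Rm a \<rho> 0 1)"
    using block2[of "Rm a \<rho> 0 1"] unfolding Qb by blast
  obtain e7 e8 where E4: "char_poly (Qb a \<rho> 1 1) = [:- of_real e7, 1:] * [:- of_real e8, 1:]" "sqrt e7 + sqrt e8 = nrm (Rm a \<rho> 1 1)"
    using block2[of "Rm a \<rho> 1 1"] unfolding Qb by blast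
  define es where "es = map complex_of_real [e1,e2,e3,e4,e5,e6,e7,e8]"
  let ?T = "ptrans2 4 2 (measured_state 2 2 a \<rho>)"
  have cp: "char_poly (mat_adjoint ?T * ?T) = (\<Prod>e\<leftarrow>es. [:- e, 1:])"
    unfolding cp_TT[OF orth rho] E1 E2 E3 E4 es_def by (simp only: list.map prod_list.Cons prod_list.Nil mult_1_right mult.assoc)
  have "trace_norm ?T = (\<Sum>e\<leftarrow>es. sqrt (Re e))"
    unfolding trace_norm_def Let_def by (rule tn_list[OF cp])
  also have "\<dots> = (sqrt e1 + sqrt e2) + (sqrt e3 + sqrt e4) + (sqrt e5 + sqrt e6) + (sqrt e7 + sqrt e8)"
    unfolding es_def by simp
  finally show ?thesis unfolding E1 E2 E3 E4 .
qed


definition sq :: complex where "sq = complex_of_real (1 / sqrt 2)"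
lemma sq2: "sq * cnj sq = 1/2" "sq * cnj (- sq) = - 1/2" "- sq * cnj sq = - 1/2" "- sq * cnj (- sq) = 1/2"
proof -
  have "sq * cnj sq = complex_of_real ((1 / sqrt 2) * (1 / sqrt 2))" by (simp only: sq_def complex_cnj_complex_of_real of_real_mult)
  also have "(1 / sqrt 2) * (1 / sqrt 2) = (1/2 :: real)" by (simp add: field_simps)
  finally show "sq * cnj sq = 1/2" by simp
  thus "sq * cnj (- sq) = - 1/2" "- sq * cnj sq = - 1/2" "- sq * cnj (- sq) = 1/2" by simp_all
qed
lemma t1: "phi_plus = vec_of_list [sq, 0, 0, sq]" by (simp add: phi_plus_def sq_def)
lemma t2: "phi_minus = vec_of_list [sq, 0, 0, -sq]" by (simp add: phi_minus_def sq_def)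
lemma t3: "psi_plus = vec_of_list [0, sq, sq, 0]" by (simp add: psi_plus_def sq_def)
lemma t4: "psi_minus = vec_of_list [0, sq, -sq, 0]" by (simp add: psi_minus_def sq_def)

definition bellE :: "real \<Rightarrow> real \<Rightarrow> real \<Rightarrow> real \<Rightarrow> nat \<Rightarrow> nat \<Rightarrow> real" where
  "bellE p0 p1 p2 p3 i j = (if (i = 0 \<and> j = 0) \<or> (i = 3 \<and> j = 3) then (p0+p3)/2
     else if (i = 1 \<and> j = 1) \<or> (i = 2 \<and> j = 2) then (p1+p2)/2
     else if (i = 0 \<and> j = 3) \<or> (i = 3 \<and> j = 0) then (p0-p3)/2
     else if (i = 1 \<and> j = 2) \<or> (i = 2 \<and> j = 1) then (p1-p2)/2 else 0)"

definition rhoB :: "real \<Rightarrow> real \<Rightarrow> real \<Rightarrow> real \<Rightarrow> complex mat" where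
  "rhoB p0 p1 p2 p3 = mat 4 4 (\<lambda>(i,j). complex_of_real (bellE p0 p1 p2 p3 i j))"

lemma vecs:
  "dim_vec phi_plus = 4" "phi_plus $ 0 = sq" "phi_plus $ 1 = 0" "phi_plus $ 2 = 0" "phi_plus $ 3 = sq"
  "dim_vec phi_minus = 4" "phi_minus $ 0 = sq" "phi_minus $ 1 = 0" "phi_minus $ 2 = 0" "phi_minus $ 3 = -sq"
  "dim_vec psi_plus = 4" "psi_plus $ 0 = 0" "psi_plus $ 1 = sq" "psi_plus $ 2 = sq" "psi_plus $ 3 = 0"
  "dim_vec psi_minus = 4" "psi_minus $ 0 = 0" "psi_minus $ 1 = sq" "psi_minus $ 2 = -sq" "psi_minus $ 3 = 0"
  by (simp_all only: t1 t2 t3 t4 vec_of_list_index dim_vec_of_list; simp)+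

lemma rho_eq: "complex_of_real p0 \<cdot>\<^sub>m ketbra phi_plus + complex_of_real p1 \<cdot>\<^sub>m ketbra psi_plus
           + complex_of_real p2 \<cdot>\<^sub>m ketbra psi_minus + complex_of_real p3 \<cdot>\<^sub>m ketbra phi_minus = rhoB p0 p1 p2 p3"
proof (rule eq_matI)
  fix i j assume "i < dim_row (rhoB p0 p1 p2 p3)" "j < dim_col (rhoB p0 p1 p2 p3)"
  hence ij: "i < 4" "j < 4" by (auto simp: rhoB_def)
  have E: "(complex_of_real p0 \<cdot>\<^sub>m ketbra phi_plus + complex_of_real p1 \<cdot>\<^sub>m ketbra psi_plus
           + complex_of_real p2 \<cdot>\<^sub>m ketbra psi_minus + complex_of_real p3 \<cdot>\<^sub>m ketbra phi_minus) $$ (i,j)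
     = of_real p0 * (phi_plus $ i * cnj (phi_plus $ j)) + of_real p1 * (psi_plus $ i * cnj (psi_plus $ j))
      + of_real p2 * (psi_minus $ i * cnj (psi_minus $ j)) + of_real p3 * (phi_minus $ i * cnj (phi_minus $ j))"
    using ij by (simp add: ketbra_def vecs)
  have "i \<in> {0,1,2,3}" "j \<in> {0,1,2,3}" using ij by auto
  thus "(complex_of_real p0 \<cdot>\<^sub>m ketbra phi_plus + complex_of_real p1 \<cdot>\<^sub>m ketbra psi_plus
           + complex_of_real p2 \<cdot>\<^sub>m ketbra psi_minus + complex_of_real p3 \<cdot>\<^sub>m ketbra phi_minus) $$ (i,j) = rhoB p0 p1 p2 p3 $$ (i,j)"
    unfolding E by (elim insertE emptyE; simp add: rhoB_def bellE_def vecs vecs[unfolded One_nat_def] sq2; simp add: algebra_simps)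
qed (auto simp: rhoB_def ketbra_def vecs)

lemma sig_carrier: "sigma m \<in> carrier_mat 2 2"
proof -
  have "length [a, b] = (2::nat)" for a b :: "complex list" by simp
  thus ?thesis unfolding sigma_def mat_of_rows_list_def carrier_mat_def by (simp only: dim_row_mat dim_col_mat if_cancel) (simp split: if_split)
qed

lemma sig_entries:
  "sigma 1 $$ (0,0) = 0" "sigma 1 $$ (0,1) = 1" "sigma 1 $$ (1,0) = 1" "sigma 1 $$ (1,1) = 0"
  "sigma 2 $$ (0,0) = 0" "sigma 2 $$ (0,1) = -\<i>" "sigma 2 $$ (1,0) = \<i>" "sigma 2 $$ (1,1) = 0"
  "sigma 3 $$ (0,0) = 1" "sigma 3 $$ (0,1) = 0" "sigma 3 $$ (1,0) = 0" "sigma 3 $$ (1,1) = -1"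
  by (simp_all add: sigma_def mat_of_rows_list_def)

lemma corr_gen: assumes "\<rho> \<in> carrier_mat 4 4"
  shows "corr \<rho> m m = (\<Sum>i\<in>{0..<4}. \<Sum>k\<in>{0..<4}. sigma m $$ (i div 2, k div 2) * sigma m $$ (i mod 2, k mod 2) * \<rho> $$ (k, i))"
proof -
  have K: "kron (sigma m) (sigma m) \<in> carrier_mat 4 4" using sig_carrier[of m] by (simp add: kron_def)
  have "corr \<rho> m m = (\<Sum>i\<in>{0..<4}. (kron (sigma m) (sigma m) * \<rho>) $$ (i,i))"
    unfolding corr_def mtrace_def using K by (simp add: lessThan_atLeast0)
  also have "\<dots> = (\<Sum>i\<in>{0..<4}. \<Sum>k\<in>{0..<4}. sigma m $$ (i div 2, k div 2) * sigma m $$ (i mod 2, k mod 2) * \<rho> $$ (k, i))"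
    by (rule sum.cong[OF refl], insert K assms sig_carrier[of m], auto simp: scalar_prod_def kron_def)
  finally show ?thesis .
qed

lemma rhoB_carrier: "rhoB p0 p1 p2 p3 \<in> carrier_mat 4 4" by (simp add: rhoB_def)

lemma corr_bell1: "corr (rhoB p0 p1 p2 p3) 1 1 = of_real (p0 - p3 + p1 - p2)"
  by (simp only: corr_gen[OF rhoB_carrier] sum4;
      simp add: sig_entries sig_entries[unfolded One_nat_def] rhoB_def bellE_def; simp add: field_simps)
lemma corr_bell2: "corr (rhoB p0 p1 p2 p3) 2 2 = of_real (p1 - p2 - p0 + p3)"
  by (simp only: corr_gen[OF rhoB_carrier] sum4;
      simp add: sig_entries sig_entries[unfolded One_nat_def] rhoB_def bellE_def; simp add: field_simps)
lemma corr_bell3: "corr (rhoB p0 p1 p2 p3) 3 3 = of_real (p0 + p3 - p1 - p2)"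
  by (simp only: corr_gen[OF rhoB_carrier] sum4;
      simp add: sig_entries sig_entries[unfolded One_nat_def] rhoB_def bellE_def; simp add: field_simps)


declare One_nat_def [simp del]

lemma Rm_bell: fixes a :: "nat \<Rightarrow> complex vec" and p0 p1 p2 p3 :: real
  defines "A \<equiv> (p0+p3)/2" and "C \<equiv> (p1+p2)/2" and "Bq \<equiv> (p0-p3)/2" and "D \<equiv> (p1-p2)/2"
  shows "Rm a (rhoB p0 p1 p2 p3) k l 0 0 = of_real A * (cnj (a k $ 0) * a l $ 0) + of_real C * (cnj (a k $ 1) * a l $ 1)"
    "Rm a (rhoB p0 p1 p2 p3) k l 0 1 = of_real Bq * (cnj (a k $ 0) * a l $ 1) + of_real D * (cnj (a k $ 1) * a l $ 0)"
    "Rm a (rhoB p0 p1 p2 p3) k l 1 0 = of_real D * (cnj (a k $ 0) * a l $ 1) + of_real Bq * (cnj (a k $ 1) * a l $ 0)"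
    "Rm a (rhoB p0 p1 p2 p3) k l 1 1 = of_real C * (cnj (a k $ 0) * a l $ 0) + of_real A * (cnj (a k $ 1) * a l $ 1)"
  unfolding A_def C_def Bq_def D_def
  by (simp_all add: Rm_def sum2 rhoB_def bellE_def; simp add: algebra_simps)+

lemma nrm_cnjT: assumes "Y 0 0 = cnj (X 0 0)" "Y 0 1 = cnj (X 1 0)" "Y 1 0 = cnj (X 0 1)" "Y 1 1 = cnj (X 1 1)"
  shows "nrm Y = nrm X"
proof -
  have "Y 0 0 * Y 1 1 - Y 0 1 * Y 1 0 = cnj (X 0 0 * X 1 1 - X 0 1 * X 1 0)" unfolding assms by simp
  hence "cmod (Y 0 0 * Y 1 1 - Y 0 1 * Y 1 0) = cmod (X 0 0 * X 1 1 - X 0 1 * X 1 0)" by (metis complex_mod_cnj)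
  thus ?thesis unfolding nrm_def assms by (simp add: algebra_simps)
qed

lemma diag_nrm: fixes \<alpha> \<beta> :: complex and A C Bq D :: real
  assumes n: "cnj \<alpha> * \<alpha> + cnj \<beta> * \<beta> = 1" and AB: "\<bar>Bq\<bar> \<le> A" and CD: "\<bar>D\<bar> \<le> C"
  and X: "X 0 0 = of_real A * (cnj \<alpha> * \<alpha>) + of_real C * (cnj \<beta> * \<beta>)"
    "X 0 1 = of_real Bq * (cnj \<alpha> * \<beta>) + of_real D * (cnj \<beta> * \<alpha>)"
    "X 1 0 = of_real D * (cnj \<alpha> * \<beta>) + of_real Bq * (cnj \<beta> * \<alpha>)"
    "X 1 1 = of_real C * (cnj \<alpha> * \<alpha>) + of_real A * (cnj \<beta> * \<beta>)"
  shows "nrm X = A + C"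
proof -
  define u v where "u = (cmod \<alpha>)\<^sup>2" and "v = (cmod \<beta>)\<^sup>2"
  have uv: "u + v = 1" using n unfolding u_def v_def cnorm_sq by (metis of_real_1 of_real_add of_real_eq_iff)
  have u0: "u \<ge> 0" "v \<ge> 0" unfolding u_def v_def by auto
  define w where "w = cnj \<alpha> * \<beta>"
  have cw: "cnj \<beta> * \<alpha> = cnj w" unfolding w_def by simp
  have w2: "(cmod w)\<^sup>2 = u * v" unfolding w_def u_def v_def by (simp add: norm_mult power_mult_distrib)
  define x0 x1 where "x0 = A * u + C * v" and "x1 = C * u + A * v"
  have A0: "A \<ge> 0" "C \<ge> 0" using AB CD by auto
  have x0: "x0 \<ge> 0" "x1 \<ge> 0" unfolding x0_def x1_def using A0 u0 by auto
  have X00: "X 0 0 = of_real x0" and X11: "X 1 1 = of_real x1"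
    unfolding X x0_def x1_def u_def v_def cnorm_sq by simp_all
  define y where "y = X 0 1"
  have X01: "X 0 1 = y" by (simp add: y_def)
  have X10: "X 1 0 = cnj y" unfolding y_def X w_def by (simp add: algebra_simps)
  define m where "m = cmod y"
  have m: "m \<le> (\<bar>Bq\<bar> + \<bar>D\<bar>) * cmod w"
  proof -
    have "m \<le> cmod (of_real Bq * w) + cmod (of_real D * cnj w)" unfolding m_def y_def X cw
      unfolding w_def by (rule norm_triangle_ineq)
    thus ?thesis by (simp add: norm_mult algebra_simps)
  qed
  have m0: "m \<ge> 0" unfolding m_def by simp
  have "m\<^sup>2 \<le> ((\<bar>Bq\<bar> + \<bar>D\<bar>) * cmod w)\<^sup>2" by (rule power_mono[OF m m0])
  also have "\<dots> = (\<bar>Bq\<bar> + \<bar>D\<bar>)\<^sup>2 * (u * v)" by (simp add: power_mult_distrib w2)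
  also have "\<dots> \<le> (A + C)\<^sup>2 * (u * v)"
    by (rule mult_right_mono, rule power_mono, insert AB CD u0, auto)
  also have "\<dots> \<le> x0 * x1"
  proof -
    have "x0 * x1 - (A + C)\<^sup>2 * (u * v) = A * C * (u - v)\<^sup>2"
      unfolding x0_def x1_def by (simp add: power2_eq_square algebra_simps)
    moreover have "A * C * (u - v)\<^sup>2 \<ge> 0" using A0 by simp
    ultimately show ?thesis by linarith
  qed
  finally have mx: "m\<^sup>2 \<le> x0 * x1" .
  have det: "X 0 0 * X 1 1 - X 0 1 * X 1 0 = of_real (x0 * x1 - m\<^sup>2)"
    unfolding X00 X11 X01 X10 m_def by (simp add: mult.commute[of y] cnorm_sq)
  have "nrm X = sqrt (x0\<^sup>2 + m\<^sup>2 + m\<^sup>2 + x1\<^sup>2 + 2 * (x0 * x1 - m\<^sup>2))"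
  proof -
    have cm: "cmod (X 0 0 * X 1 1 - X 0 1 * X 1 0) = x0 * x1 - m\<^sup>2" unfolding det norm_of_real using mx by simp
    show ?thesis unfolding nrm_def cm unfolding X00 X11 X01 X10 using x0 by (simp add: m_def)
  qed
  also have "x0\<^sup>2 + m\<^sup>2 + m\<^sup>2 + x1\<^sup>2 + 2 * (x0 * x1 - m\<^sup>2) = (x0 + x1)\<^sup>2"
    by (simp add: power2_eq_square algebra_simps)
  also have "sqrt \<dots> = x0 + x1" using x0 by simp
  also have "\<dots> = (A + C) * (u + v)" unfolding x0_def x1_def by (simp add: algebra_simps)
  finally show ?thesis using uv by simp
qed


definition SW :: "real \<Rightarrow> real \<Rightarrow> real \<Rightarrow> complex \<Rightarrow> complex \<Rightarrow> complex \<Rightarrow> real" where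
  "SW c1 c2 c3 v1 v2 v3 = 2 * (c1\<^sup>2 * (cmod v1)\<^sup>2 + c2\<^sup>2 * (cmod v2)\<^sup>2 + c3\<^sup>2 * (cmod v3)\<^sup>2)
     + 2 * cmod (of_real (c1\<^sup>2) * v1\<^sup>2 + of_real (c2\<^sup>2) * v2\<^sup>2 + of_real (c3\<^sup>2) * v3\<^sup>2)"

lemma para: "(cmod (a + b))\<^sup>2 + (cmod (a - b))\<^sup>2 = 2 * (cmod a)\<^sup>2 + 2 * (cmod b)\<^sup>2"
  by (simp only: cmod_power2) (simp add: power2_eq_square algebra_simps)

lemma off_nrm: fixes \<alpha> \<beta> \<gamma> \<delta> :: complex and A C Bq D :: real
  assumes o: "cnj \<alpha> * \<gamma> + cnj \<beta> * \<delta> = 0"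
  and X: "X 0 0 = of_real A * (cnj \<alpha> * \<gamma>) + of_real C * (cnj \<beta> * \<delta>)"
    "X 0 1 = of_real Bq * (cnj \<alpha> * \<delta>) + of_real D * (cnj \<beta> * \<gamma>)"
    "X 1 0 = of_real D * (cnj \<alpha> * \<delta>) + of_real Bq * (cnj \<beta> * \<gamma>)"
    "X 1 1 = of_real C * (cnj \<alpha> * \<gamma>) + of_real A * (cnj \<beta> * \<delta>)"
  shows "nrm X = sqrt (SW (2*(Bq+D)) (2*(D-Bq)) (2*(A-C)) (cnj \<alpha> * \<delta> + cnj \<beta> * \<gamma>)
      (\<i> * (cnj \<beta> * \<gamma> - cnj \<alpha> * \<delta>)) (2 * (cnj \<alpha> * \<gamma>)) / 16)"
proof -
  define x y z where "x = cnj \<alpha> * \<gamma>" and "y = cnj \<alpha> * \<delta>" and "z = cnj \<beta> * \<gamma>"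
  have bd: "cnj \<beta> * \<delta> = - x" using o unfolding x_def by (simp add: eq_neg_iff_add_eq_0 add.commute)
  define c1 c2 c3 where "c1 = 2*(Bq+D)" and "c2 = 2*(D-Bq)" and "c3 = 2*(A-C)"
  define v1 v2 v3 where "v1 = y + z" and "v2 = \<i> * (z - y)" and "v3 = 2 * x"
  define P Q where "P = of_real c1 * v1" and "Q = of_real c2 * (y - z)"
  have X00: "X 0 0 = of_real (A - C) * x" unfolding X bd x_def by (simp add: algebra_simps)
  have X11: "X 1 1 = - (of_real (A - C) * x)" unfolding X bd x_def by (simp add: algebra_simps)
  have X01: "X 0 1 = (P - Q) / 4" unfolding X P_def Q_def v1_def c1_def c2_def y_def z_def by (simp add: algebra_simps)
  have X10: "X 1 0 = (P + Q) / 4" unfolding X P_def Q_def v1_def c1_def c2_def y_def z_def by (simp add: algebra_simps)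
  have v2sq: "v2\<^sup>2 = - (y - z)\<^sup>2" unfolding v2_def by (simp add: power_mult_distrib power2_eq_square algebra_simps)
  have cv2: "cmod v2 = cmod (y - z)" unfolding v2_def by (simp add: norm_mult norm_minus_commute)
  have h1: "(cmod (X 0 0))\<^sup>2 + (cmod (X 0 1))\<^sup>2 + (cmod (X 1 0))\<^sup>2 + (cmod (X 1 1))\<^sup>2
      = 2 * (c1\<^sup>2 * (cmod v1)\<^sup>2 + c2\<^sup>2 * (cmod v2)\<^sup>2 + c3\<^sup>2 * (cmod v3)\<^sup>2) / 16"
  proof -
    have "(cmod (X 0 1))\<^sup>2 + (cmod (X 1 0))\<^sup>2 = ((cmod (P + Q))\<^sup>2 + (cmod (P - Q))\<^sup>2) / 16"
      unfolding X01 X10 by (simp add: norm_divide power_divide)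
    also have "\<dots> = (2 * (cmod P)\<^sup>2 + 2 * (cmod Q)\<^sup>2) / 16" by (simp add: para)
    also have "(cmod P)\<^sup>2 = c1\<^sup>2 * (cmod v1)\<^sup>2" unfolding P_def by (simp add: norm_mult power_mult_distrib)
    also have "(cmod Q)\<^sup>2 = c2\<^sup>2 * (cmod v2)\<^sup>2" unfolding Q_def cv2 by (simp add: norm_mult power_mult_distrib)
    finally have e1: "(cmod (X 0 1))\<^sup>2 + (cmod (X 1 0))\<^sup>2 = (2 * (c1\<^sup>2 * (cmod v1)\<^sup>2) + 2 * (c2\<^sup>2 * (cmod v2)\<^sup>2)) / 16" .
    have cX: "cmod (X 0 0) = \<bar>A - C\<bar> * cmod x" "cmod (X 1 1) = \<bar>A - C\<bar> * cmod x"
      unfolding X00 X11 by (simp only: norm_mult norm_of_real norm_minus_cancel)+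
    have e2: "(cmod (X 0 0))\<^sup>2 + (cmod (X 1 1))\<^sup>2 = 2 * (c3\<^sup>2 * (cmod v3)\<^sup>2) / 16"
      unfolding cX c3_def v3_def by (simp add: norm_mult power_mult_distrib power2_abs; simp add: power2_eq_square algebra_simps)
    show ?thesis using e1 e2 by (simp add: algebra_simps)
  qed
  have h2: "X 0 0 * X 1 1 - X 0 1 * X 1 0 = - (of_real (c1\<^sup>2) * v1\<^sup>2 + of_real (c2\<^sup>2) * v2\<^sup>2 + of_real (c3\<^sup>2) * v3\<^sup>2) / 16"
    unfolding X00 X11 X01 X10 v2sq unfolding P_def Q_def c3_def v3_def
    by (simp add: power2_eq_square field_simps)
  have "nrm X = sqrt (2 * (c1\<^sup>2 * (cmod v1)\<^sup>2 + c2\<^sup>2 * (cmod v2)\<^sup>2 + c3\<^sup>2 * (cmod v3)\<^sup>2) / 16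
      + 2 * (cmod (of_real (c1\<^sup>2) * v1\<^sup>2 + of_real (c2\<^sup>2) * v2\<^sup>2 + of_real (c3\<^sup>2) * v3\<^sup>2) / 16))"
  proof -
    have cW: "cmod (X 0 0 * X 1 1 - X 0 1 * X 1 0) = cmod (of_real (c1\<^sup>2) * v1\<^sup>2 + of_real (c2\<^sup>2) * v2\<^sup>2 + of_real (c3\<^sup>2) * v3\<^sup>2) / 16"
      unfolding h2 by (simp only: norm_divide norm_minus_cancel) simp
    show ?thesis unfolding nrm_def cW h1[symmetric] by (simp add: add.assoc)
  qed
  also have "\<dots> = sqrt (SW c1 c2 c3 v1 v2 v3 / 16)" unfolding SW_def by (simp add: algebra_simps)
  finally show ?thesis unfolding c1_def c2_def c3_def v1_def v2_def v3_def x_def y_def z_def .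
qed

lemma vcons: fixes \<alpha> \<beta> \<gamma> \<delta> :: complex
  assumes n1: "cnj \<alpha> * \<alpha> + cnj \<beta> * \<beta> = 1" and n2: "cnj \<gamma> * \<gamma> + cnj \<delta> * \<delta> = 1"
    and o: "cnj \<alpha> * \<gamma> + cnj \<beta> * \<delta> = 0"
  defines "v1 \<equiv> cnj \<alpha> * \<delta> + cnj \<beta> * \<gamma>" and "v2 \<equiv> \<i> * (cnj \<beta> * \<gamma> - cnj \<alpha> * \<delta>)" and "v3 \<equiv> 2 * (cnj \<alpha> * \<gamma>)"
  shows "(cmod v1)\<^sup>2 + (cmod v2)\<^sup>2 + (cmod v3)\<^sup>2 = 2" "v1\<^sup>2 + v2\<^sup>2 + v3\<^sup>2 = 0"
proof -
  have bd: "cnj \<beta> * \<delta> = - (cnj \<alpha> * \<gamma>)" using o by (simp add: eq_neg_iff_add_eq_0 add.commute)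
  have "v1\<^sup>2 + v2\<^sup>2 + v3\<^sup>2 = 4 * (cnj \<alpha> * \<gamma>) * (cnj \<alpha> * \<gamma> + cnj \<beta> * \<delta>)"
    unfolding v1_def v2_def v3_def by (simp add: power2_eq_square algebra_simps)
  thus "v1\<^sup>2 + v2\<^sup>2 + v3\<^sup>2 = 0" using o by simp
  define a b c d where "a = (cmod \<alpha>)\<^sup>2" and "b = (cmod \<beta>)\<^sup>2" and "c = (cmod \<gamma>)\<^sup>2" and "d = (cmod \<delta>)\<^sup>2"
  have ab: "a + b = 1" using n1 unfolding a_def b_def cnorm_sq by (metis of_real_1 of_real_add of_real_eq_iff)
  have cd: "c + d = 1" using n2 unfolding c_def d_def cnorm_sq by (metis of_real_1 of_real_add of_real_eq_iff)
  have "cmod (cnj \<beta> * \<delta>) = cmod (cnj \<alpha> * \<gamma>)" unfolding bd by simp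
  hence bdac: "b * d = a * c" unfolding a_def b_def c_def d_def by (simp add: norm_mult power_mult_distrib[symmetric])
  have "(cmod v1)\<^sup>2 + (cmod v2)\<^sup>2 = 2 * (cmod (cnj \<alpha> * \<delta>))\<^sup>2 + 2 * (cmod (cnj \<beta> * \<gamma>))\<^sup>2"
  proof -
    have "cmod v2 = cmod (cnj \<alpha> * \<delta> - cnj \<beta> * \<gamma>)" unfolding v2_def by (simp add: norm_mult norm_minus_commute)
    thus ?thesis unfolding v1_def by (simp add: para)
  qed
  also have "\<dots> = 2 * (a * d) + 2 * (b * c)" unfolding a_def b_def c_def d_def by (simp add: norm_mult power_mult_distrib)
  finally have "(cmod v1)\<^sup>2 + (cmod v2)\<^sup>2 + (cmod v3)\<^sup>2 = 2 * (a * d) + 2 * (b * c) + 4 * (a * c)"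
    unfolding v3_def a_def c_def by (simp add: norm_mult power_mult_distrib)
  also have "\<dots> = 2 * ((a + b) * (c + d))" using bdac by (simp add: algebra_simps)
  finally show "(cmod v1)\<^sup>2 + (cmod v2)\<^sup>2 + (cmod v3)\<^sup>2 = 2" using ab cd by simp
qed

lemma med3: fixes ma mb mc :: real and va vb vc :: complex
  assumes "ma \<le> mb" "mb \<le> mc" and n: "(cmod va)\<^sup>2 + (cmod vb)\<^sup>2 + (cmod vc)\<^sup>2 = 2"
    and s: "va\<^sup>2 + vb\<^sup>2 + vc\<^sup>2 = 0"
  shows "2 * mb \<le> ma * (cmod va)\<^sup>2 + mb * (cmod vb)\<^sup>2 + mc * (cmod vc)\<^sup>2 + cmod (of_real ma * va\<^sup>2 + of_real mb * vb\<^sup>2 + of_real mc * vc\<^sup>2)"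
proof -
  have "of_real ma * va\<^sup>2 + of_real mb * vb\<^sup>2 + of_real mc * vc\<^sup>2 = of_real (mc - mb) * vc\<^sup>2 - of_real (mb - ma) * va\<^sup>2"
  proof -
    have "of_real ma * va\<^sup>2 + of_real mb * vb\<^sup>2 + of_real mc * vc\<^sup>2 = of_real (mc - mb) * vc\<^sup>2 - of_real (mb - ma) * va\<^sup>2
       + of_real mb * (va\<^sup>2 + vb\<^sup>2 + vc\<^sup>2)" by (simp add: algebra_simps)
    thus ?thesis unfolding s by simp
  qed
  moreover have "cmod (of_real (mc - mb) * vc\<^sup>2 - of_real (mb - ma) * va\<^sup>2) \<ge> cmod (of_real (mb - ma) * va\<^sup>2) - cmod (of_real (mc - mb) * vc\<^sup>2)"
    by (metis norm_minus_commute norm_triangle_ineq2)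
  moreover have "cmod (of_real (mb - ma) * va\<^sup>2) = (mb - ma) * (cmod va)\<^sup>2"
    by (simp only: norm_mult norm_of_real norm_power) (use assms in simp)
  moreover have "cmod (of_real (mc - mb) * vc\<^sup>2) = (mc - mb) * (cmod vc)\<^sup>2"
    by (simp only: norm_mult norm_of_real norm_power) (use assms in simp)
  ultimately have "cmod (of_real ma * va\<^sup>2 + of_real mb * vb\<^sup>2 + of_real mc * vc\<^sup>2) \<ge> (mb - ma) * (cmod va)\<^sup>2 - (mc - mb) * (cmod vc)\<^sup>2" by simp
  moreover have "mb * (cmod vb)\<^sup>2 = mb * 2 - mb * (cmod va)\<^sup>2 - mb * (cmod vc)\<^sup>2"
  proof -
    have e: "(cmod vb)\<^sup>2 = 2 - (cmod va)\<^sup>2 - (cmod vc)\<^sup>2" using n by simp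
    show ?thesis unfolding e by (simp add: right_diff_distrib)
  qed
  ultimately show ?thesis by (simp add: algebra_simps)
qed




definition vv1 :: "(nat \<Rightarrow> complex vec) \<Rightarrow> complex" where
  "vv1 a = cnj (a 0 $ 0) * a 1 $ 1 + cnj (a 0 $ 1) * a 1 $ 0"
definition vv2 :: "(nat \<Rightarrow> complex vec) \<Rightarrow> complex" where
  "vv2 a = \<i> * (cnj (a 0 $ 1) * a 1 $ 0 - cnj (a 0 $ 0) * a 1 $ 1)"
definition vv3 :: "(nat \<Rightarrow> complex vec) \<Rightarrow> complex" where
  "vv3 a = 2 * (cnj (a 0 $ 0) * a 1 $ 0)"

lemma neg_formula: fixes p0 p1 p2 p3 :: real
  assumes ob: "orthonormal_basis 2 a" and p: "p0 \<ge> 0" "p1 \<ge> 0" "p2 \<ge> 0" "p3 \<ge> 0" "p0 + p1 + p2 + p3 = 1"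
  shows "negativity (2 * 2) 2 (measured_state 2 2 a (rhoB p0 p1 p2 p3)) =
    sqrt (SW (p0 - p3 + p1 - p2) (p1 - p2 - p0 + p3) (p0 + p3 - p1 - p2) (vv1 a) (vv2 a) (vv3 a) / 16)"
proof -
  let ?\<rho> = "rhoB p0 p1 p2 p3"
  define A C Bq D where "A = (p0+p3)/2" and "C = (p1+p2)/2" and "Bq = (p0-p3)/2" and "D = (p1-p2)/2"
  note R = Rm_bell[of a p0 p1 p2 p3, folded A_def C_def Bq_def D_def]
  have AB: "\<bar>Bq\<bar> \<le> A" and CD: "\<bar>D\<bar> \<le> C" unfolding A_def Bq_def C_def D_def using p by auto
  have n0: "cnj (a 0 $ 0) * a 0 $ 0 + cnj (a 0 $ 1) * a 0 $ 1 = 1" using orth[OF ob, of 0 0] by simp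
  have n1: "cnj (a 1 $ 0) * a 1 $ 0 + cnj (a 1 $ 1) * a 1 $ 1 = 1" using orth[OF ob, of 1 1] by simp
  have o: "cnj (a 0 $ 0) * a 1 $ 0 + cnj (a 0 $ 1) * a 1 $ 1 = 0" using orth[OF ob, of 0 1] by simp
  have N00: "nrm (Rm a ?\<rho> 0 0) = A + C" by (rule diag_nrm[OF n0 AB CD]; rule R)
  have N11: "nrm (Rm a ?\<rho> 1 1) = A + C" by (rule diag_nrm[OF n1 AB CD]; rule R)
  have N10: "nrm (Rm a ?\<rho> 1 0) = nrm (Rm a ?\<rho> 0 1)"
    by (rule nrm_cnjT; simp add: R algebra_simps)
  have N01: "nrm (Rm a ?\<rho> 0 1) = sqrt (SW (2*(Bq+D)) (2*(D-Bq)) (2*(A-C)) (vv1 a) (vv2 a) (vv3 a) / 16)"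
    unfolding vv1_def vv2_def vv3_def by (rule off_nrm[OF o]; rule R)
  have c: "2*(Bq+D) = p0 - p3 + p1 - p2" "2*(D-Bq) = p1 - p2 - p0 + p3" "2*(A-C) = p0 + p3 - p1 - p2"
    unfolding A_def C_def Bq_def D_def by (simp_all add: field_simps)
  have AC: "2 * (A + C) = 1" unfolding A_def C_def using p by (simp add: field_simps)
  show ?thesis unfolding negativity_def
    using trace_norm_T[OF ob rhoB_carrier, of p0 p1 p2 p3] N00 N11 N10 N01 AC unfolding c
    by simp
qed

lemma sort3: fixes x y z l1 l2 l3 :: real
  assumes "mset [l1,l2,l3] = mset [x,y,z]" "l1 \<le> l2" "l2 \<le> l3" "x \<le> y" "y \<le> z"
  shows "l2 = y"
proof -
  have "sort [x,y,z] = [l1,l2,l3]" by (rule properties_for_sort, insert assms, auto)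
  moreover have "sort [x,y,z] = [x,y,z]" by (rule sorted_sort_id, insert assms, auto)
  ultimately show ?thesis by simp
qed

lemma sq_le: "\<bar>x\<bar> \<le> \<bar>y\<bar> \<Longrightarrow> (x::real)\<^sup>2 \<le> y\<^sup>2" by (simp add: abs_le_square_iff)

lemma sw_lb: fixes c1 c2 c3 l1 l2 l3 :: real
  assumes ms: "mset [l1,l2,l3] = mset [\<bar>c1\<bar>,\<bar>c2\<bar>,\<bar>c3\<bar>]" and l: "l1 \<le> l2" "l2 \<le> l3"
    and n: "(cmod v1)\<^sup>2 + (cmod v2)\<^sup>2 + (cmod v3)\<^sup>2 = 2" and s: "v1\<^sup>2 + v2\<^sup>2 + v3\<^sup>2 = 0"
  shows "4 * l2\<^sup>2 \<le> SW c1 c2 c3 v1 v2 v3"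
proof -
  have sw: "SW c1 c2 c3 v1 v2 v3 = 2 * (c1\<^sup>2 * (cmod v1)\<^sup>2 + c2\<^sup>2 * (cmod v2)\<^sup>2 + c3\<^sup>2 * (cmod v3)\<^sup>2
     + cmod (of_real (c1\<^sup>2) * v1\<^sup>2 + of_real (c2\<^sup>2) * v2\<^sup>2 + of_real (c3\<^sup>2) * v3\<^sup>2))" unfolding SW_def by simp
  have "\<bar>c1\<bar> \<le> \<bar>c2\<bar> \<and> \<bar>c2\<bar> \<le> \<bar>c3\<bar> \<or> \<bar>c1\<bar> \<le> \<bar>c3\<bar> \<and> \<bar>c3\<bar> \<le> \<bar>c2\<bar> \<or>
        \<bar>c2\<bar> \<le> \<bar>c1\<bar> \<and> \<bar>c1\<bar> \<le> \<bar>c3\<bar> \<or> \<bar>c2\<bar> \<le> \<bar>c3\<bar> \<and> \<bar>c3\<bar> \<le> \<bar>c1\<bar> \<or>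
        \<bar>c3\<bar> \<le> \<bar>c1\<bar> \<and> \<bar>c1\<bar> \<le> \<bar>c2\<bar> \<or> \<bar>c3\<bar> \<le> \<bar>c2\<bar> \<and> \<bar>c2\<bar> \<le> \<bar>c1\<bar>" by linarith
  thus ?thesis
  proof (elim disjE conjE)
    assume h: "\<bar>c1\<bar> \<le> \<bar>c2\<bar>" "\<bar>c2\<bar> \<le> \<bar>c3\<bar>"
    have "l2 = \<bar>c2\<bar>" by (rule sort3[OF _ l h], insert ms, simp add: add_mset_commute)
    moreover note med3[OF sq_le[OF h(1)] sq_le[OF h(2)], of v1 v2 v3]
    ultimately show ?thesis using n s unfolding sw by (simp add: ac_simps)
  next
    assume h: "\<bar>c1\<bar> \<le> \<bar>c3\<bar>" "\<bar>c3\<bar> \<le> \<bar>c2\<bar>"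
    have "l2 = \<bar>c3\<bar>" by (rule sort3[OF _ l h], insert ms, simp add: add_mset_commute)
    moreover note med3[OF sq_le[OF h(1)] sq_le[OF h(2)], of v1 v3 v2]
    ultimately show ?thesis using n s unfolding sw by (simp add: ac_simps)
  next
    assume h: "\<bar>c2\<bar> \<le> \<bar>c1\<bar>" "\<bar>c1\<bar> \<le> \<bar>c3\<bar>"
    have "l2 = \<bar>c1\<bar>" by (rule sort3[OF _ l h], insert ms, simp add: add_mset_commute)
    moreover note med3[OF sq_le[OF h(1)] sq_le[OF h(2)], of v2 v1 v3]
    ultimately show ?thesis using n s unfolding sw by (simp add: ac_simps)
  next
    assume h: "\<bar>c2\<bar> \<le> \<bar>c3\<bar>" "\<bar>c3\<bar> \<le> \<bar>c1\<bar>"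
    have "l2 = \<bar>c3\<bar>" by (rule sort3[OF _ l h], insert ms, simp add: add_mset_commute)
    moreover note med3[OF sq_le[OF h(1)] sq_le[OF h(2)], of v2 v3 v1]
    ultimately show ?thesis using n s unfolding sw by (simp add: ac_simps)
  next
    assume h: "\<bar>c3\<bar> \<le> \<bar>c1\<bar>" "\<bar>c1\<bar> \<le> \<bar>c2\<bar>"
    have "l2 = \<bar>c1\<bar>" by (rule sort3[OF _ l h], insert ms, simp add: add_mset_commute)
    moreover note med3[OF sq_le[OF h(1)] sq_le[OF h(2)], of v3 v1 v2]
    ultimately show ?thesis using n s unfolding sw by (simp add: ac_simps)
  next
    assume h: "\<bar>c3\<bar> \<le> \<bar>c2\<bar>" "\<bar>c2\<bar> \<le> \<bar>c1\<bar>"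
    have "l2 = \<bar>c2\<bar>" by (rule sort3[OF _ l h], insert ms, simp add: add_mset_commute)
    moreover note med3[OF sq_le[OF h(1)] sq_le[OF h(2)], of v3 v2 v1]
    ultimately show ?thesis using n s unfolding sw by (simp add: ac_simps)
  qed
qed


lemma cnj_sq: "cnj sq = sq" by (simp add: sq_def)
lemma sqsq: "sq * sq = 1/2" using sq2(1) cnj_sq by simp

lemma all2: "(\<forall>j::nat. j < 2 \<longrightarrow> P j) = (P 0 \<and> P 1)"
  by (auto simp: numeral_2_eq_2 less_Suc_eq One_nat_def)

definition aZ :: "nat \<Rightarrow> complex vec" where "aZ k = (if k = 0 then vec_of_list [1, 0] else vec_of_list [0, 1])"
definition aX :: "nat \<Rightarrow> complex vec" where "aX k = (if k = 0 then vec_of_list [sq, sq] else vec_of_list [sq, -sq])"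
definition aY :: "nat \<Rightarrow> complex vec" where "aY k = (if k = 0 then vec_of_list [sq, \<i> * sq] else vec_of_list [sq, -\<i> * sq])"

lemma aZe: "aZ 0 $ 0 = 1" "aZ 0 $ 1 = 0" "aZ 1 $ 0 = 0" "aZ 1 $ 1 = 1" "dim_vec (aZ k) = 2"
  by (simp_all add: aZ_def vec_index_vCons)
lemma aXe: "aX 0 $ 0 = sq" "aX 0 $ 1 = sq" "aX 1 $ 0 = sq" "aX 1 $ 1 = -sq" "dim_vec (aX k) = 2"
  by (simp_all add: aX_def vec_index_vCons)
lemma aYe: "aY 0 $ 0 = sq" "aY 0 $ 1 = \<i> * sq" "aY 1 $ 0 = sq" "aY 1 $ 1 = - \<i> * sq" "dim_vec (aY k) = 2"
  by (simp_all add: aY_def vec_index_vCons)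

lemma obZ: "orthonormal_basis 2 aZ"
  unfolding orthonormal_basis_def all2 carrier_vec_def mem_Collect_eq aZe(5) scalar_prod_def dim_vec_conjugate sum2
  by (simp add: aZe)
lemma obX: "orthonormal_basis 2 aX"
  unfolding orthonormal_basis_def all2 carrier_vec_def mem_Collect_eq aXe(5) scalar_prod_def dim_vec_conjugate sum2
  by (simp add: aXe cnj_sq sqsq)
lemma obY: "orthonormal_basis 2 aY"
  unfolding orthonormal_basis_def all2 carrier_vec_def mem_Collect_eq aYe(5) scalar_prod_def dim_vec_conjugate sum2
  by (simp add: aYe cnj_sq sqsq algebra_simps)

lemma vZ: "vv1 aZ = 1" "vv2 aZ = - \<i>" "vv3 aZ = 0"
  by (simp_all add: vv1_def vv2_def vv3_def aZe)
lemma vX: "vv1 aX = 0" "vv2 aX = \<i>" "vv3 aX = 1"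
  by (simp_all add: vv1_def vv2_def vv3_def aXe cnj_sq sqsq)
lemma vY: "vv1 aY = - \<i>" "vv2 aY = 0" "vv3 aY = 1"
  by (simp_all add: vv1_def vv2_def vv3_def aYe cnj_sq sqsq algebra_simps)

lemma maxlem: fixes a b :: real shows "sqrt ((2*(a\<^sup>2 + b\<^sup>2) + 2*\<bar>b\<^sup>2 - a\<^sup>2\<bar>) / 16) = max \<bar>a\<bar> \<bar>b\<bar> / 2"
proof (cases "\<bar>a\<bar> \<le> \<bar>b\<bar>")
  case True
  hence "a\<^sup>2 \<le> b\<^sup>2" by (simp add: abs_le_square_iff)
  hence "(2*(a\<^sup>2 + b\<^sup>2) + 2*\<bar>b\<^sup>2 - a\<^sup>2\<bar>) / 16 = (\<bar>b\<bar> / 2)\<^sup>2" by (simp add: power_divide)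
  thus ?thesis using True by simp
next
  case False
  hence "b\<^sup>2 \<le> a\<^sup>2" by (simp add: abs_le_square_iff)
  hence "(2*(a\<^sup>2 + b\<^sup>2) + 2*\<bar>b\<^sup>2 - a\<^sup>2\<bar>) / 16 = (\<bar>a\<bar> / 2)\<^sup>2" by (simp add: power_divide)
  thus ?thesis using False by simp
qed

lemma swZ: "SW c1 c2 c3 (vv1 aZ) (vv2 aZ) (vv3 aZ) = 2*(c1\<^sup>2 + c2\<^sup>2) + 2*\<bar>c2\<^sup>2 - c1\<^sup>2\<bar>"
proof -
  have "cmod (of_real (c1\<^sup>2) - of_real (c2\<^sup>2)) = \<bar>c2\<^sup>2 - c1\<^sup>2\<bar>"
    by (metis abs_minus_commute norm_of_real of_real_diff)
  thus ?thesis unfolding SW_def vZ by (simp add: power2_eq_square[of \<i>])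
qed
lemma swX: "SW c1 c2 c3 (vv1 aX) (vv2 aX) (vv3 aX) = 2*(c2\<^sup>2 + c3\<^sup>2) + 2*\<bar>c3\<^sup>2 - c2\<^sup>2\<bar>"
proof -
  have "cmod (- of_real (c2\<^sup>2) + of_real (c3\<^sup>2)) = \<bar>c3\<^sup>2 - c2\<^sup>2\<bar>"
    by (metis add.commute diff_conv_add_uminus norm_of_real of_real_diff)
  thus ?thesis unfolding SW_def vX by (simp add: power2_eq_square[of \<i>])
qed
lemma swY: "SW c1 c2 c3 (vv1 aY) (vv2 aY) (vv3 aY) = 2*(c1\<^sup>2 + c3\<^sup>2) + 2*\<bar>c3\<^sup>2 - c1\<^sup>2\<bar>"
proof -
  have "cmod (- of_real (c1\<^sup>2) + of_real (c3\<^sup>2)) = \<bar>c3\<^sup>2 - c1\<^sup>2\<bar>"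
    by (metis add.commute diff_conv_add_uminus norm_of_real of_real_diff)
  thus ?thesis unfolding SW_def vY by (simp add: power2_eq_square[of \<i>])
qed


theorem theorem11:
  fixes p0 p1 p2 p3 :: real and \<rho> :: "complex mat" and l1 l2 l3 :: real
  assumes "p0 \<ge> 0" "p1 \<ge> 0" "p2 \<ge> 0" "p3 \<ge> 0" "p0 + p1 + p2 + p3 = 1"
    and "\<rho> = complex_of_real p0 \<cdot>\<^sub>m ketbra phi_plus + complex_of_real p1 \<cdot>\<^sub>m ketbra psi_plus
           + complex_of_real p2 \<cdot>\<^sub>m ketbra psi_minus + complex_of_real p3 \<cdot>\<^sub>m ketbra phi_minus"
    and "mset [l1, l2, l3] = mset [cmod (corr \<rho> 1 1), cmod (corr \<rho> 2 2), cmod (corr \<rho> 3 3)]"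
    and "l1 \<le> l2" "l2 \<le> l3"
  shows "QN_A 2 2 \<rho> = l2 / 2"
proof -
  define c1 c2 c3 where "c1 = p0 - p3 + p1 - p2" and "c2 = p1 - p2 - p0 + p3" and "c3 = p0 + p3 - p1 - p2"
  have rho: "\<rho> = rhoB p0 p1 p2 p3" using assms(6) rho_eq by simp
  have ms: "mset [l1,l2,l3] = mset [\<bar>c1\<bar>,\<bar>c2\<bar>,\<bar>c3\<bar>]"
    using assms(7) unfolding rho corr_bell1 corr_bell2 corr_bell3 c1_def c2_def c3_def norm_of_real .
  have "l2 \<in> set_mset (mset [\<bar>c1\<bar>,\<bar>c2\<bar>,\<bar>c3\<bar>])" unfolding ms[symmetric] by simp
  hence l20: "l2 \<ge> 0" by auto
  have NF: "negativity (2 * 2) 2 (measured_state 2 2 a \<rho>) = sqrt (SW c1 c2 c3 (vv1 a) (vv2 a) (vv3 a) / 16)"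
    if ob: "orthonormal_basis 2 a" for a
    unfolding rho c1_def c2_def c3_def by (rule neg_formula[OF ob assms(1-5)])
  define S where "S = {negativity (2 * 2) 2 (measured_state 2 2 a \<rho>) | a. orthonormal_basis 2 a}"
  have lb: "l2 / 2 \<le> x" if "x \<in> S" for x
  proof -
    obtain a where ob: "orthonormal_basis 2 a" and x: "x = negativity (2 * 2) 2 (measured_state 2 2 a \<rho>)"
      using \<open>x \<in> S\<close> unfolding S_def by blast
    have n1: "cnj (a 0 $ 0) * a 0 $ 0 + cnj (a 0 $ 1) * a 0 $ 1 = 1" using orth[OF ob, of 0 0] by simp
    have n2: "cnj (a 1 $ 0) * a 1 $ 0 + cnj (a 1 $ 1) * a 1 $ 1 = 1" using orth[OF ob, of 1 1] by simp
    have o: "cnj (a 0 $ 0) * a 1 $ 0 + cnj (a 0 $ 1) * a 1 $ 1 = 0" using orth[OF ob, of 0 1] by simp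
    have vc1: "(cmod (vv1 a))\<^sup>2 + (cmod (vv2 a))\<^sup>2 + (cmod (vv3 a))\<^sup>2 = 2"
      unfolding vv1_def vv2_def vv3_def by (rule vcons(1)[OF n1 n2 o])
    have vc2: "(vv1 a)\<^sup>2 + (vv2 a)\<^sup>2 + (vv3 a)\<^sup>2 = 0"
      unfolding vv1_def vv2_def vv3_def by (rule vcons(2)[OF n1 n2 o])
    have sw: "4 * l2\<^sup>2 \<le> SW c1 c2 c3 (vv1 a) (vv2 a) (vv3 a)" by (rule sw_lb[OF ms assms(8) assms(9) vc1 vc2])
    have "l2 / 2 = sqrt (4 * l2\<^sup>2 / 16)"
    proof -
      have "4 * l2\<^sup>2 / 16 = (l2 / 2)\<^sup>2" by (simp add: power_divide)
      thus ?thesis using l20 by simp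
    qed
    also have "\<dots> \<le> sqrt (SW c1 c2 c3 (vv1 a) (vv2 a) (vv3 a) / 16)" using sw by simp
    also have "\<dots> = x" unfolding x NF[OF ob] ..
    finally show ?thesis .
  qed
  have att: "l2 / 2 \<in> S"
  proof -
    have "(\<bar>c1\<bar> \<le> \<bar>c3\<bar> \<and> \<bar>c2\<bar> \<le> \<bar>c3\<bar>) \<or> (\<bar>c2\<bar> \<le> \<bar>c1\<bar> \<and> \<bar>c3\<bar> \<le> \<bar>c1\<bar>) \<or> (\<bar>c1\<bar> \<le> \<bar>c2\<bar> \<and> \<bar>c3\<bar> \<le> \<bar>c2\<bar>)" by linarith
    thus ?thesis
    proof (elim disjE conjE)
      assume h: "\<bar>c1\<bar> \<le> \<bar>c3\<bar>" "\<bar>c2\<bar> \<le> \<bar>c3\<bar>"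
      have e: "l2 = max \<bar>c1\<bar> \<bar>c2\<bar>"
      proof (cases "\<bar>c1\<bar> \<le> \<bar>c2\<bar>")
        case True
        have "l2 = \<bar>c2\<bar>" by (rule sort3[OF _ assms(8,9) True h(2)], insert ms, simp add: add_mset_commute)
        thus ?thesis using True by simp
      next
        case False
        have "l2 = \<bar>c1\<bar>" by (rule sort3[OF _ assms(8,9) _ h(1)], insert ms False, auto simp: add_mset_commute)
        thus ?thesis using False by simp
      qed
      have "negativity (2 * 2) 2 (measured_state 2 2 aZ \<rho>) = l2 / 2"
        unfolding NF[OF obZ] swZ maxlem e ..
      thus ?thesis using obZ unfolding S_def by (intro CollectI exI[of _ aZ]) simp
    next
      assume h: "\<bar>c2\<bar> \<le> \<bar>c1\<bar>" "\<bar>c3\<bar> \<le> \<bar>c1\<bar>"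
      have e: "l2 = max \<bar>c2\<bar> \<bar>c3\<bar>"
      proof (cases "\<bar>c2\<bar> \<le> \<bar>c3\<bar>")
        case True
        have "l2 = \<bar>c3\<bar>" by (rule sort3[OF _ assms(8,9) True h(2)], insert ms, simp add: add_mset_commute)
        thus ?thesis using True by simp
      next
        case False
        have "l2 = \<bar>c2\<bar>" by (rule sort3[OF _ assms(8,9) _ h(1)], insert ms False, auto simp: add_mset_commute)
        thus ?thesis using False by simp
      qed
      have "negativity (2 * 2) 2 (measured_state 2 2 aX \<rho>) = l2 / 2"
        unfolding NF[OF obX] swX maxlem e ..
      thus ?thesis using obX unfolding S_def by (intro CollectI exI[of _ aX]) simp
    next
      assume h: "\<bar>c1\<bar> \<le> \<bar>c2\<bar>" "\<bar>c3\<bar> \<le> \<bar>c2\<bar>"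
      have e: "l2 = max \<bar>c1\<bar> \<bar>c3\<bar>"
      proof (cases "\<bar>c1\<bar> \<le> \<bar>c3\<bar>")
        case True
        have "l2 = \<bar>c3\<bar>" by (rule sort3[OF _ assms(8,9) True h(2)], insert ms, simp add: add_mset_commute)
        thus ?thesis using True by simp
      next
        case False
        have "l2 = \<bar>c1\<bar>" by (rule sort3[OF _ assms(8,9) _ h(1)], insert ms False, auto simp: add_mset_commute)
        thus ?thesis using False by simp
      qed
      have "negativity (2 * 2) 2 (measured_state 2 2 aY \<rho>) = l2 / 2"
        unfolding NF[OF obY] swY maxlem e ..
      thus ?thesis using obY unfolding S_def by (intro CollectI exI[of _ aY]) simp
    qed
  qed
  show ?thesis unfolding QN_A_def S_def[symmetric] by (rule cInf_eq_minimum[OF att lb])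
qed


end
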